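(* There exists a natural number $n_0$ such that for every natural number $n\ge n_0$ there exists a real symmetric $n\times n$ matrix $T$ with $\|T\|_1=1$ and $$\forall R,C\in M_n(\mathbb{C}):\quad|\mathrm{tr}((R\circ C)T)|\le3\|R\|_r\|C\|_c\,n^{-1/2}.$$
   Context: $\|T\|_1$ is the trace norm (first Schatten norm, the sum of the singular values). $R\circ C$ is the entrywise Schur product $(r_{ij}c_{ij})$. $\|R\|_r:=\max_i(\sum_j|r_{ij}|^2)^{1/2}$ and $\|C\|_c:=\max_j(\sum_i|c_{ij}|^2)^{1/2}$. *)

theory Defs
  imports Complex_Main "Jordan_Normal_Form.Char_Poly"
begin

text \<open>Singular values of a real matrix A are the square roots of the eigenvalues of
  A^T A (counted with algebraic multiplicity, i.e. root multiplicity in the characteristic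
  polynomial).\<close>
definition trace_norm :: "real mat \<Rightarrow> real" where
  "trace_norm A =
     (let p = char_poly (transpose_mat A * A)
      in \<Sum>a\<in>{a. poly p a = 0}. real (order a p) * sqrt a)"

definition schur_prod :: "complex mat \<Rightarrow> complex mat \<Rightarrow> complex mat" where
  "schur_prod R C = mat (dim_row R) (dim_col R) (\<lambda>(i,j). R $$ (i,j) * C $$ (i,j))"

definition mat_trace :: "complex mat \<Rightarrow> complex" where
  "mat_trace A = (\<Sum>i<dim_row A. A $$ (i,i))"

definition row_norm :: "complex mat \<Rightarrow> real" where
  "row_norm R = Max ((\<lambda>i. sqrt (\<Sum>j<dim_col R. (cmod (R $$ (i,j)))\<^sup>2)) ` {..<dim_row R})"

definition col_norm :: "complex mat \<Rightarrow> real" where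
  "col_norm C = Max ((\<lambda>j. sqrt (\<Sum>i<dim_row C. (cmod (C $$ (i,j)))\<^sup>2)) ` {..<dim_col C})"

end

theory Submission imports Defs "HOL-Analysis.L2_Norm" begin

lemma cis_sum:
  fixes d :: int assumes n: "n > 0"
  shows "(\<Sum>k<n. cis (2*pi*real k*real_of_int d/real n)) = (if cis (2*pi*real_of_int d/real n) = 1 then of_nat n else 0)"
proof -
  let ?w = "cis (2*pi*real_of_int d/real n)"
  have pw: "cis (2*pi*real k*real_of_int d/real n) = ?w^k" for k::nat
  proof -
    have "?w^k = cis (real k * (2*pi*real_of_int d/real n))" by (rule DeMoivre)
    also have "real k * (2*pi*real_of_int d/real n) = 2*pi*real k*real_of_int d/real n" by simp
    finally show ?thesis by simp
  qed
  have wn: "?w^n = 1"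
  proof -
    have "?w^n = cis (real n * (2*pi*real_of_int d/real n))" by (rule DeMoivre)
    also have "real n * (2*pi*real_of_int d/real n) = 2*pi*real_of_int d" using n by simp
    also have "cis (2*pi*real_of_int d) = 1" by (simp add: complex_eq_iff cos_int_2pin sin_int_2pin)
    finally show ?thesis .
  qed
  show ?thesis unfolding pw using wn by (simp add: sum_gp_strict)
qed

lemma cos_sum:
  fixes d :: int assumes n: "n > 0"
  shows "(\<Sum>k<n. cos (2*pi*real k*real_of_int d/real n)) = (if cis (2*pi*real_of_int d/real n) = 1 then real n else 0)"
  using arg_cong[OF cis_sum[OF n, of d], of Re] by (simp add: Re_sum split: if_splits)

lemma sin_sum:
  fixes d :: int assumes n: "n > 0"
  shows "(\<Sum>k<n. sin (2*pi*real k*real_of_int d/real n)) = 0"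
  using arg_cong[OF cis_sum[OF n, of d], of Im] by (simp add: Im_sum split: if_splits)

lemma aux_div: fixes x N M :: real assumes "2*pi*x/N = M*2*pi" "N > 0" shows "x = M*N"
proof -
  have "2*pi*x = (M*2*pi)*N" using assms by (simp add: divide_eq_eq)
  hence "2*pi*x = 2*pi*(M*N)" by (simp only: ac_simps)
  thus ?thesis by simp
qed

lemma aux_int: fixes a m :: int assumes "real_of_int a = real_of_int m * real n" shows "a = m * int n"
proof -
  have "real_of_int a = real_of_int (m * int n)" using assms by simp
  thus ?thesis by (simp only: of_int_eq_iff)
qed

lemma cis_one:
  assumes "j < n" "l < n" "cis (2*pi*(real_of_int (int j - int l))/real n) = 1"
  shows "j = l"
proof -
  have "cos (2*pi*(real_of_int (int j - int l))/real n) = 1" using assms(3)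
    by (metis cis.sel(1) one_complex.sel(1))
  then obtain m::int where m: "2*pi*(real_of_int (int j - int l))/real n = real_of_int m * 2 * pi"
    using cos_one_2pi_int by blast
  have n0: "real n > 0" using assms by simp
  have "real_of_int (int j - int l) = real_of_int m * real n" using aux_div[OF m n0] .
  hence e: "int j - int l = m * int n" by (rule aux_int)
  have b: "\<bar>int j - int l\<bar> < int n" using assms by auto
  have "\<bar>m * int n\<bar> < int n" using b unfolding e .
  hence "\<bar>m\<bar> * int n < 1 * int n" unfolding abs_mult by simp
  hence "\<bar>m\<bar> < 1" by (rule mult_right_less_imp_less) simp
  hence "m = 0" by simp
  hence "int j - int l = 0" unfolding e by simp
  thus ?thesis by simp
qed

definition hart :: "nat \<Rightarrow> nat \<Rightarrow> nat \<Rightarrow> real" where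
  "hart n j k = cos (2*pi*real j*real k/real n) + sin (2*pi*real j*real k/real n)"

lemma hart_sym: "hart n j k = hart n k j"
  unfolding hart_def by (simp add: mult_ac)

lemma hart_bound: "\<bar>hart n j k\<bar> \<le> 2"
proof -
  let ?x = "2*pi*real j*real k/real n"
  have "\<bar>cos ?x + sin ?x\<bar> \<le> \<bar>cos ?x\<bar> + \<bar>sin ?x\<bar>" by (rule abs_triangle_ineq)
  moreover have "\<bar>cos ?x\<bar> \<le> 1" by (rule abs_cos_le_one)
  moreover have "\<bar>sin ?x\<bar> \<le> 1" by (rule abs_sin_le_one)
  ultimately show ?thesis unfolding hart_def by linarith
qed

lemma hart_prod: "hart n j k * hart n k l =
   cos (2*pi*real k*real_of_int (int j - int l)/real n) + sin (2*pi*real k*real_of_int (int j + int l)/real n)"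
proof -
  let ?a = "2*pi*real j*real k/real n" and ?b = "2*pi*real k*real l/real n"
  have "hart n j k * hart n k l = cos (?a - ?b) + sin (?a + ?b)"
    unfolding hart_def cos_diff sin_add by (simp add: algebra_simps)
  also have "?a - ?b = 2*pi*real k*real_of_int (int j - int l)/real n"
    by (simp only: diff_divide_distrib[symmetric]) (simp add: algebra_simps)
  also have "?a + ?b = 2*pi*real k*real_of_int (int j + int l)/real n"
    by (simp only: add_divide_distrib[symmetric]) (simp add: algebra_simps)
  finally show ?thesis .
qed

lemma hart_orth:
  assumes "j < n" "l < n"
  shows "(\<Sum>k<n. hart n j k * hart n k l) = (if j = l then real n else 0)"
proof -
  have n: "n > 0" using assms by simp
  have "(\<Sum>k<n. hart n j k * hart n k l) =
     (\<Sum>k<n. cos (2*pi*real k*real_of_int (int j - int l)/real n)) + (\<Sum>k<n. sin (2*pi*real k*real_of_int (int j + int l)/real n))"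
    unfolding hart_prod sum.distrib ..
  also have "\<dots> = (if j = l then real n else 0)"
    unfolding cos_sum[OF n] sin_sum[OF n] using cis_one[OF assms] by auto
  finally show ?thesis .
qed


lemma sum_pairs: "(\<Sum>i\<in>A. \<Sum>k\<in>B. h (i,k)) = (\<Sum>p\<in>A\<times>B. h p)"
  by (simp add: sum.cartesian_product)

lemma aux_arith: "(a::real) > 0 \<Longrightarrow> 2 / ((a*a)*a) * ((a*r)*(a*c)) = 2*r*c*(1/a)"
  by (simp add: field_simps)

lemma sum_single1: "sum f {x} = f x" by simp

lemma powr_mhalf: "real n powr (-1/2) = 1 / sqrt (real n)"
proof -
  have "real n powr (-1/2) = real n powr (-(1/2))" by simp
  also have "\<dots> = inverse (real n powr (1/2))" by (rule powr_minus)
  also have "\<dots> = inverse (sqrt (real n))" by (simp add: powr_half_sqrt)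
  also have "\<dots> = 1 / sqrt (real n)" by (simp add: inverse_eq_divide)
  finally show ?thesis .
qed

lemma char_poly_scalar:
  fixes c :: real
  shows "char_poly (mat n n (\<lambda>(i,j). if i = j then c else 0)) = [:-c, 1:] ^ n"
proof -
  let ?D = "mat n n (\<lambda>(i,j). if i = j then c else 0) :: real mat"
  have ut: "upper_triangular ?D" unfolding upper_triangular_def by auto
  have dg: "diag_mat ?D = replicate n c"
    by (rule nth_equalityI) (auto simp: diag_mat_def)
  have "char_poly ?D = (\<Prod>a\<leftarrow>diag_mat ?D. [:-a, 1:])"
    by (rule char_poly_upper_triangular[OF _ ut, where n=n]) simp
  also have "\<dots> = (\<Prod>a\<leftarrow>replicate n c. [:-a, 1:])" unfolding dg ..
  also have "\<dots> = [:-c, 1:] ^ n" by (induct n) auto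
  finally show ?thesis .
qed

lemma trace_norm_scalar:
  assumes n: "n > 0" and M: "transpose_mat T * T = mat n n (\<lambda>(i,j). if i = j then c else 0)"
  shows "trace_norm T = real n * sqrt c"
proof -
  have cp: "char_poly (transpose_mat T * T) = [:-c, 1:] ^ n" unfolding M by (rule char_poly_scalar)
  have rts: "{a. poly ([:-c, 1:] ^ n) a = 0} = {c}" using n by (auto simp: poly_power)
  show ?thesis unfolding trace_norm_def Let_def cp rts sum_single1 order_power_n_n ..
qed

definition hmat :: "nat \<Rightarrow> real mat" where
  "hmat n = mat n n (\<lambda>(j,k). hart n j k / (real n * sqrt (real n)))"

lemma hmat_carrier: "hmat n \<in> carrier_mat n n" unfolding hmat_def by simp

lemma hmat_dims [simp]: "dim_row (hmat n) = n" "dim_col (hmat n) = n"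
  unfolding hmat_def by simp_all

lemma hmat_sym: "transpose_mat (hmat n) = hmat n"
  by (rule eq_matI) (auto simp: hmat_def hart_sym)

lemma hmat_sq:
  assumes n: "n > 0"
  shows "transpose_mat (hmat n) * hmat n = mat n n (\<lambda>(i,j). if i = j then 1 / (real n)^2 else 0)"
proof (rule eq_matI)
  fix i j assume i: "i < dim_row (mat n n (\<lambda>(i,j). if i = j then 1 / (real n)^2 else 0) :: real mat)"
    and j: "j < dim_col (mat n n (\<lambda>(i,j). if i = j then 1 / (real n)^2 else 0) :: real mat)"
  hence i': "i < n" and j': "j < n" by auto
  let ?s = "real n * sqrt (real n)"
  have ss: "?s * ?s = (real n)^3" using n by (simp add: power3_eq_cube)
  have "(transpose_mat (hmat n) * hmat n) $$ (i,j) = row (hmat n) i \<bullet> col (hmat n) j"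
    unfolding hmat_sym by (rule index_mult_mat) (simp_all add: i' j')
  also have "\<dots> = (\<Sum>k\<in>{0..<n}. row (hmat n) i $ k * col (hmat n) j $ k)"
    unfolding scalar_prod_def by simp
  also have "\<dots> = (\<Sum>k<n. hmat n $$ (i,k) * hmat n $$ (k,j))"
    using i' j' by (intro sum.cong) auto
  also have "\<dots> = (\<Sum>k<n. hart n i k * hart n k j) / (?s * ?s)"
    using i' j' by (simp add: hmat_def sum_divide_distrib)
  also have "\<dots> = (if i = j then 1 / (real n)^2 else 0)"
    unfolding hart_orth[OF i' j'] ss using n by (simp add: power2_eq_square power3_eq_cube)
  finally show "(transpose_mat (hmat n) * hmat n) $$ (i,j) = mat n n (\<lambda>(i,j). if i = j then 1 / (real n)^2 else 0) $$ (i,j)"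
    using i' j' by simp
qed (auto simp: hmat_def)

lemma hmat_trace_norm:
  assumes n: "n > 0" shows "trace_norm (hmat n) = 1"
proof -
  have "trace_norm (hmat n) = real n * sqrt (1 / (real n)^2)"
    by (rule trace_norm_scalar[OF n hmat_sq[OF n]])
  also have "\<dots> = 1" using n by (simp add: real_sqrt_divide)
  finally show ?thesis .
qed

lemma hmat_entry_bound:
  assumes "k < n" "i < n"
  shows "\<bar>hmat n $$ (k,i)\<bar> \<le> 2 / (real n * sqrt (real n))"
proof -
  have s: "real n * sqrt (real n) > 0" using assms by simp
  have e: "hmat n $$ (k,i) = hart n k i / (real n * sqrt (real n))" using assms by (simp add: hmat_def)
  show ?thesis unfolding e abs_divide abs_of_pos[OF s] using s hart_bound[of n k i]
    by (intro divide_right_mono) auto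
qed

theorem mainTheorem5:
  shows "\<exists>n0::nat. \<forall>n\<ge>n0. \<exists>T :: real mat.
           T \<in> carrier_mat n n \<and> transpose_mat T = T \<and> trace_norm T = 1 \<and>
           (\<forall>R C :: complex mat. R \<in> carrier_mat n n \<longrightarrow> C \<in> carrier_mat n n \<longrightarrow>
              cmod (mat_trace (schur_prod R C * map_mat complex_of_real T))
                \<le> 3 * row_norm R * col_norm C * real n powr (-1/2))"
proof (intro exI allI impI)
  fix n :: nat assume "1 \<le> n"
  hence n: "n > 0" by simp
  let ?T = "hmat n"
  let ?s = "real n * sqrt (real n)"
  show "?T \<in> carrier_mat n n \<and> transpose_mat ?T = ?T \<and> trace_norm ?T = 1 \<and>
           (\<forall>R C :: complex mat. R \<in> carrier_mat n n \<longrightarrow> C \<in> carrier_mat n n \<longrightarrow>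
              cmod (mat_trace (schur_prod R C * map_mat complex_of_real ?T))
                \<le> 3 * row_norm R * col_norm C * real n powr (-1/2))"
  proof (intro conjI allI impI hmat_carrier hmat_sym hmat_trace_norm[OF n])
    fix R C :: "complex mat" assume R: "R \<in> carrier_mat n n" and C: "C \<in> carrier_mat n n"
    define rr where "rr = row_norm R"
    define cc where "cc = col_norm C"
    have rowb: "(\<Sum>j<n. (cmod (R $$ (i,j)))\<^sup>2) \<le> rr^2" (is "?S \<le> _") if "i < n" for i
    proof -
      have "sqrt (\<Sum>j<n. (cmod (R $$ (i,j)))\<^sup>2) \<le> rr"
        unfolding rr_def row_norm_def using R that by (intro Max_ge) auto
      moreover have nn: "0 \<le> ?S" by (intro sum_nonneg) simp
      ultimately have "(sqrt ?S)^2 \<le> rr^2"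
        by (intro power_mono) simp_all
      thus ?thesis using nn by simp
    qed
    have colb: "(\<Sum>i<n. (cmod (C $$ (i,j)))\<^sup>2) \<le> cc^2" (is "?S \<le> _") if "j < n" for j
    proof -
      have "sqrt (\<Sum>i<n. (cmod (C $$ (i,j)))\<^sup>2) \<le> cc"
        unfolding cc_def col_norm_def using C that by (intro Max_ge) auto
      moreover have nn: "0 \<le> ?S" by (intro sum_nonneg) simp
      ultimately have "(sqrt ?S)^2 \<le> cc^2"
        by (intro power_mono) simp_all
      thus ?thesis using nn by simp
    qed
    have rr0: "rr \<ge> 0"
    proof -
      have "sqrt (\<Sum>j<n. (cmod (R $$ (0,j)))\<^sup>2) \<le> rr"
        unfolding rr_def row_norm_def using R n by (intro Max_ge) auto
      moreover have "0 \<le> sqrt (\<Sum>j<n. (cmod (R $$ (0,j)))\<^sup>2)" by (intro real_sqrt_ge_zero sum_nonneg) simp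
      ultimately show ?thesis by linarith
    qed
    have cc0: "cc \<ge> 0"
    proof -
      have "sqrt (\<Sum>i<n. (cmod (C $$ (i,0)))\<^sup>2) \<le> cc"
        unfolding cc_def col_norm_def using C n by (intro Max_ge) auto
      moreover have "0 \<le> sqrt (\<Sum>i<n. (cmod (C $$ (i,0)))\<^sup>2)" by (intro real_sqrt_ge_zero sum_nonneg) simp
      ultimately show ?thesis by linarith
    qed
    define A where "A = {..<n} \<times> {..<n}"
    define f where "f = (\<lambda>(i,k). cmod (R $$ (i,k)))"
    define g where "g = (\<lambda>(i,k). cmod (C $$ (i,k)))"
    have hf: "L2_set f A \<le> sqrt (real n) * rr"
    proof -
      have "L2_set f A = sqrt (\<Sum>i<n. \<Sum>k<n. (f (i,k))\<^sup>2)"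
        unfolding L2_set_def A_def using sum_pairs[of "\<lambda>p. (f p)\<^sup>2" "{..<n}" "{..<n}"] by simp
      also have "\<dots> = sqrt (\<Sum>i<n. \<Sum>k<n. (cmod (R $$ (i,k)))\<^sup>2)"
        unfolding f_def by simp
      also have "\<dots> \<le> sqrt (\<Sum>i<n. rr^2)"
        using rowb by (intro real_sqrt_le_mono sum_mono) auto
      also have "\<dots> = sqrt (real n) * rr" using rr0 by (simp add: real_sqrt_mult)
      finally show ?thesis .
    qed
    have hg: "L2_set g A \<le> sqrt (real n) * cc"
    proof -
      have e1: "L2_set g A = sqrt (\<Sum>i<n. \<Sum>k<n. (g (i,k))\<^sup>2)"
        unfolding L2_set_def A_def using sum_pairs[of "\<lambda>p. (g p)\<^sup>2" "{..<n}" "{..<n}"] by simp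
      have e2: "(\<Sum>i<n. \<Sum>k<n. (g (i,k))\<^sup>2) = (\<Sum>k<n. \<Sum>i<n. (cmod (C $$ (i,k)))\<^sup>2)"
        by (subst sum.swap) (simp add: g_def)
      have "L2_set g A = sqrt (\<Sum>k<n. \<Sum>i<n. (cmod (C $$ (i,k)))\<^sup>2)"
        unfolding e1 e2 ..
      also have "\<dots> \<le> sqrt (\<Sum>k<n. cc^2)"
        using colb by (intro real_sqrt_le_mono sum_mono) auto
      also have "\<dots> = sqrt (real n) * cc" using cc0 by (simp add: real_sqrt_mult)
      finally show ?thesis .
    qed
    have tr: "mat_trace (schur_prod R C * map_mat complex_of_real ?T) =
       (\<Sum>i<n. \<Sum>k<n. R $$ (i,k) * C $$ (i,k) * complex_of_real (?T $$ (k,i)))"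
      unfolding mat_trace_def using R C
      by (intro sum.cong refl) (simp_all add: schur_prod_def scalar_prod_def atLeast0LessThan)
    have "cmod (mat_trace (schur_prod R C * map_mat complex_of_real ?T)) \<le>
       (\<Sum>i<n. cmod (\<Sum>k<n. R $$ (i,k) * C $$ (i,k) * complex_of_real (?T $$ (k,i))))"
      unfolding tr by (rule norm_sum)
    also have "\<dots> \<le> (\<Sum>i<n. \<Sum>k<n. cmod (R $$ (i,k)) * cmod (C $$ (i,k)) * (2 / ?s))"
    proof (intro sum_mono)
      fix i assume i: "i \<in> {..<n}"
      have "cmod (\<Sum>k<n. R $$ (i,k) * C $$ (i,k) * complex_of_real (?T $$ (k,i)))
         \<le> (\<Sum>k<n. cmod (R $$ (i,k) * C $$ (i,k) * complex_of_real (?T $$ (k,i))))"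
        by (rule norm_sum)
      also have "\<dots> \<le> (\<Sum>k<n. cmod (R $$ (i,k)) * cmod (C $$ (i,k)) * (2 / ?s))"
      proof (intro sum_mono)
        fix k assume k: "k \<in> {..<n}"
        have "cmod (R $$ (i,k) * C $$ (i,k) * complex_of_real (?T $$ (k,i))) =
          cmod (R $$ (i,k)) * cmod (C $$ (i,k)) * \<bar>?T $$ (k,i)\<bar>"
          by (simp add: norm_mult)
        also have "\<dots> \<le> cmod (R $$ (i,k)) * cmod (C $$ (i,k)) * (2 / ?s)"
          using hmat_entry_bound[of k n i] i k by (intro mult_left_mono) auto
        finally show "cmod (R $$ (i,k) * C $$ (i,k) * complex_of_real (?T $$ (k,i))) \<le> cmod (R $$ (i,k)) * cmod (C $$ (i,k)) * (2 / ?s)" .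
      qed
      finally show "cmod (\<Sum>k<n. R $$ (i,k) * C $$ (i,k) * complex_of_real (?T $$ (k,i)))
         \<le> (\<Sum>k<n. cmod (R $$ (i,k)) * cmod (C $$ (i,k)) * (2 / ?s))" .
    qed
    also have "\<dots> = (\<Sum>i<n. \<Sum>k<n. (2 / ?s) * (\<bar>f (i,k)\<bar> * \<bar>g (i,k)\<bar>))"
      by (intro sum.cong refl) (simp add: f_def g_def ac_simps)
    also have "\<dots> = (2 / ?s) * (\<Sum>i<n. \<Sum>k<n. \<bar>f (i,k)\<bar> * \<bar>g (i,k)\<bar>)"
      by (simp only: sum_distrib_left)
    also have "\<dots> = (2 / ?s) * (\<Sum>p\<in>A. \<bar>f p\<bar> * \<bar>g p\<bar>)"
      unfolding A_def using sum_pairs[of "\<lambda>p. \<bar>f p\<bar> * \<bar>g p\<bar>" "{..<n}" "{..<n}"] by simp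
    also have "\<dots> \<le> (2 / ?s) * (L2_set f A * L2_set g A)"
      by (rule mult_left_mono[OF L2_set_mult_ineq]) simp
    also have "\<dots> \<le> (2 / ?s) * ((sqrt (real n) * rr) * (sqrt (real n) * cc))"
      by (rule mult_left_mono[OF mult_mono[OF hf hg]]) (simp_all add: L2_set_nonneg rr0 cc0)
    also have "\<dots> = 2 * rr * cc * (1 / sqrt (real n))"
      using aux_arith[of "sqrt (real n)" rr cc] n by simp
    also have "\<dots> \<le> 3 * rr * cc * (1 / sqrt (real n))"
      using rr0 cc0 by (intro mult_right_mono mult_right_mono) auto
    finally show "cmod (mat_trace (schur_prod R C * map_mat complex_of_real ?T))
                \<le> 3 * row_norm R * col_norm C * real n powr (-1/2)"
      unfolding powr_mhalf rr_def cc_def .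
  qed
qed

end
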